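(* Fix a constant $p>0$. Let $q(k,m)$ be any function with $q(k,m)/(km)\to 0$ as $k,m\to\infty$ simultaneously. Then there is no randomized algorithm that, for every instance $M$ of the Anomalous Row Problem of size $k\times m$, probes at most $q(k,m)$ cells of $M$ and outputs the index of the anomalous row with probability at least $p$.
   Context: Anomalous Row Problem: the input is a matrix $M\in\mathbb{F}_2^{k\times m}$ (with $m\ge k+1$) such that every row except one contains exactly $k+1$ zero entries, and the remaining row (the anomalous row) contains exactly $k$ zero entries; the task is to find the anomalous row. The algorithm accesses $M$ only by probing individual cells (each probe reveals one entry). A randomized algorithm may use internal random coins; the success probability is over these coins and must hold for every valid input. *)

theory Defs
  imports "HOL-Probability.Probability"
begin

text \<open>A matrix over F_2 is a function from cells (row, column) to bool
  (True = 1, False = 0); only cells (i,j) with i < k, j < m are relevant.\<close>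
type_synonym matrix = "nat \<times> nat \<Rightarrow> bool"

text \<open>Deterministic adaptive probing algorithm = decision tree.
  Probe c l r probes cell c, continues with l if the entry is 0 (False)
  and with r if it is 1 (True); Leaf i outputs row index i.\<close>
datatype dtree = Leaf nat | Probe "nat \<times> nat" dtree dtree

fun tree_output :: "dtree \<Rightarrow> matrix \<Rightarrow> nat" where
  "tree_output (Leaf i) M = i"
| "tree_output (Probe c l r) M = tree_output (if M c then r else l) M"

fun probed :: "dtree \<Rightarrow> matrix \<Rightarrow> (nat \<times> nat) set" where
  "probed (Leaf i) M = {}"
| "probed (Probe c l r) M = insert c (probed (if M c then r else l) M)"

fun wf_tree :: "nat \<Rightarrow> nat \<Rightarrow> dtree \<Rightarrow> bool" where
  "wf_tree k m (Leaf i) = True"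
| "wf_tree k m (Probe c l r) = (fst c < k \<and> snd c < m \<and> wf_tree k m l \<and> wf_tree k m r)"

definition zeros_in_row :: "nat \<Rightarrow> matrix \<Rightarrow> nat \<Rightarrow> nat" where
  "zeros_in_row m M i = card {j. j < m \<and> \<not> M (i, j)}"

definition ARP_instance :: "nat \<Rightarrow> nat \<Rightarrow> matrix \<Rightarrow> nat \<Rightarrow> bool" where
  "ARP_instance k m M a \<longleftrightarrow> k + 1 \<le> m \<and> a < k \<and> zeros_in_row m M a = k
     \<and> (\<forall>i<k. i \<noteq> a \<longrightarrow> zeros_in_row m M i = k + 1)"

text \<open>A randomized algorithm for size k x m is a probability distribution
  (over the internal coins) on decision trees. It solves the problem with
  at most Q probes and success probability at least p.\<close>
definition solves_ARP :: "nat \<Rightarrow> nat \<Rightarrow> real \<Rightarrow> real \<Rightarrow> dtree pmf \<Rightarrow> bool" where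
  "solves_ARP k m Q p A \<longleftrightarrow>
     (\<forall>t\<in>set_pmf A. wf_tree k m t) \<and>
     (\<forall>M a. ARP_instance k m M a \<longrightarrow>
        (\<forall>t\<in>set_pmf A. real (card (probed t M)) \<le> Q) \<and>
        measure_pmf.prob A {t. tree_output t M = a} \<ge> p)"

end

theory Submission
  imports Defs
begin

lemma finite_probed: "finite (probed t M)"
  by (induction t) auto

lemma out_same: "c \<notin> probed t (\<lambda>_. False) \<Longrightarrow>
  tree_output t (\<lambda>x. x = c) = tree_output t (\<lambda>_. False)"
  by (induction t) auto

lemma key: "finite X \<Longrightarrow> n < card (probed t (\<lambda>_. False) - X) \<Longrightarrow>
  \<exists>c \<in> probed t (\<lambda>_. False) - X. n < card (probed t (\<lambda>x. x = c) - X)"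
proof (induction t arbitrary: X n)
  case (Leaf i)
  then show ?case by simp
next
  case (Probe c l r)
  let ?P = "probed l (\<lambda>_. False)"
  have eq: "probed (Probe c l r) (\<lambda>_. False) = insert c ?P" by simp
  have eq2: "\<And>c'. c' \<noteq> c \<Longrightarrow> probed (Probe c l r) (\<lambda>x. x = c') = insert c (probed l (\<lambda>x. x = c'))"
    by auto
  show ?case
  proof (cases "c \<in> X")
    case True
    have "insert c ?P - X = ?P - X" using True by auto
    with Probe.prems eq have "n < card (?P - X)" by simp
    from Probe.IH(1)[OF Probe.prems(1) this] obtain c' where
      c': "c' \<in> ?P - X" "n < card (probed l (\<lambda>x. x = c') - X)" by blast
    have "c' \<noteq> c" using c' True by auto
    hence "probed (Probe c l r) (\<lambda>x. x = c') - X = probed l (\<lambda>x. x = c') - X"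
      using eq2 True by auto
    moreover have "c' \<in> probed (Probe c l r) (\<lambda>_. False) - X" using c' eq by auto
    ultimately show ?thesis using c'(2) by metis
  next
    case False
    show ?thesis
    proof (cases n)
      case 0
      have "c \<in> probed (Probe c l r) (\<lambda>x. x = c) - X" using False by simp
      moreover have "finite (probed (Probe c l r) (\<lambda>x. x = c) - X)" using finite_probed by auto
      ultimately have "0 < card (probed (Probe c l r) (\<lambda>x. x = c) - X)"
        by (metis card_gt_0_iff empty_iff)
      then show ?thesis using 0 False eq by auto
    next
      case (Suc n')
      have fX: "finite (insert c X)" using Probe.prems by simp
      have s: "insert c ?P - X = insert c (?P - insert c X)" using False by auto
      have "card (insert c ?P - X) = Suc (card (?P - insert c X))"
        unfolding s by (subst card_insert_disjoint) (auto simp: finite_probed)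
      with Probe.prems eq Suc have "n' < card (?P - insert c X)" by simp
      from Probe.IH(1)[OF fX this] obtain c' where
        c': "c' \<in> ?P - insert c X" "n' < card (probed l (\<lambda>x. x = c') - insert c X)" by blast
      have ne: "c' \<noteq> c" using c' by auto
      have s2: "probed (Probe c l r) (\<lambda>x. x = c') - X
          = insert c (probed l (\<lambda>x. x = c') - insert c X)" using eq2[OF ne] False by auto
      have "card (probed (Probe c l r) (\<lambda>x. x = c') - X)
          = Suc (card (probed l (\<lambda>x. x = c') - insert c X))"
        unfolding s2 by (subst card_insert_disjoint) (auto simp: finite_probed)
      with c' Suc have "n < card (probed (Probe c l r) (\<lambda>x. x = c') - X)" by simp
      moreover have "c' \<in> probed (Probe c l r) (\<lambda>_. False) - X" using c' eq by auto
      ultimately show ?thesis by blast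
    qed
  qed
qed

lemma zero_path_bound:
  assumes "\<And>c. c \<in> probed t (\<lambda>_. False) \<Longrightarrow> real (card (probed t (\<lambda>x. x = c))) \<le> Q"
  shows "real (card (probed t (\<lambda>_. False))) \<le> max Q 0"
proof (cases "card (probed t (\<lambda>_. False))")
  case 0 then show ?thesis by simp
next
  case (Suc n)
  then have "n < card (probed t (\<lambda>_. False) - {})" by simp
  from key[OF _ this] obtain c where c: "c \<in> probed t (\<lambda>_. False)"
    "n < card (probed t (\<lambda>x. x = c))" by auto
  with assms[OF c(1)] Suc show ?thesis by simp
qed

lemma wf_probed: "wf_tree k m t \<Longrightarrow> probed t M \<subseteq> {..<k} \<times> {..<m}"
  by (induction t) auto

lemma instance_E:
  assumes "a < k" "j < k + 1"
  shows "ARP_instance k (k+1) (\<lambda>x. x = (a, j)) a"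
proof -
  have "\<And>i. i \<noteq> a \<Longrightarrow> {ja. ja < k+1 \<and> \<not> (i, ja) = (a, j)} = {..<k+1}" by auto
  moreover have "{ja. ja < k+1 \<and> \<not> (a, ja) = (a, j)} = {..<k+1} - {j}" by auto
  ultimately show ?thesis using assms unfolding ARP_instance_def zeros_in_row_def
    by auto
qed

lemma tree_count:
  assumes wf: "wf_tree k (k+1) t"
    and bnd: "\<And>c. c \<in> {..<k}\<times>{..<k+1} \<Longrightarrow> real (card (probed t (\<lambda>x. x = c))) \<le> Q"
  shows "real (card {c \<in> {..<k}\<times>{..<k+1}. tree_output t (\<lambda>x. x = c) = fst c}) \<le> max Q 0 + real (k+1)"
proof -
  let ?R = "{..<k}\<times>{..<k+1}"
  let ?P = "probed t (\<lambda>_. False)"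
  let ?o = "tree_output t (\<lambda>_. False)"
  have PR: "?P \<subseteq> ?R" using wf_probed[OF wf] .
  have sub: "{c \<in> ?R. tree_output t (\<lambda>x. x = c) = fst c} \<subseteq> ?P \<union> ({?o}\<times>{..<k+1})"
    using out_same by fastforce
  have "card {c \<in> ?R. tree_output t (\<lambda>x. x = c) = fst c} \<le> card (?P \<union> ({?o}\<times>{..<k+1}))"
    by (rule card_mono[OF _ sub]) (auto simp: finite_probed)
  also have "\<dots> \<le> card ?P + card ({?o}\<times>{..<k+1})" by (rule card_Un_le)
  also have "\<dots> = card ?P + (k+1)" by (simp add: card_cartesian_product)
  finally have "real (card {c \<in> ?R. tree_output t (\<lambda>x. x = c) = fst c}) \<le> real (card ?P) + real (k+1)"
    by linarith
  moreover have "real (card ?P) \<le> max Q 0"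
    by (rule zero_path_bound) (use PR bnd in auto)
  ultimately show ?thesis by linarith
qed

lemma one_k:
  assumes "solves_ARP k (k+1) Q p A"
  shows "p * (real k * real (k+1)) \<le> max Q 0 + real (k+1)"
proof -
  let ?R = "{..<k}\<times>{..<k+1}"
  let ?S = "\<lambda>c. {t. tree_output t (\<lambda>x. x = c) = fst c}"
  have wf: "\<And>t. t \<in> set_pmf A \<Longrightarrow> wf_tree k (k+1) t" using assms unfolding solves_ARP_def by blast
  have inst: "\<And>c. c \<in> ?R \<Longrightarrow> ARP_instance k (k+1) (\<lambda>x. x = c) (fst c)"
    using instance_E by auto
  have prob: "\<And>c. c \<in> ?R \<Longrightarrow> measure_pmf.prob A (?S c) \<ge> p"
    using assms inst unfolding solves_ARP_def by blast
  have bnd: "\<And>t c. t \<in> set_pmf A \<Longrightarrow> c \<in> ?R \<Longrightarrow> real (card (probed t (\<lambda>x. x = c))) \<le> Q"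
    using assms inst unfolding solves_ARP_def by blast
  have "real (card ?R) * p = (\<Sum>c\<in>?R. p)" by simp
  also have "\<dots> \<le> (\<Sum>c\<in>?R. measure_pmf.prob A (?S c))" by (rule sum_mono) (use prob in auto)
  also have "\<dots> = (\<Sum>c\<in>?R. measure_pmf.expectation A (indicator (?S c)))" by simp
  also have "\<dots> = measure_pmf.expectation A (\<lambda>t. \<Sum>c\<in>?R. indicator (?S c) t)"
  proof -
    have int: "\<And>c. integrable (measure_pmf A) (\<lambda>t. indicator (?S c) t :: real)"
      by (rule measure_pmf.integrable_const_bound[where B=1]) auto
    show ?thesis
      using Bochner_Integration.integral_sum[where I="?R" and M="measure_pmf A" and f="\<lambda>c t. indicator (?S c) t :: real", OF int] by simp
  qed
  also have "\<dots> = measure_pmf.expectation A (\<lambda>t. real (card {c \<in> ?R. tree_output t (\<lambda>x. x = c) = fst c}))"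
  proof (rule Bochner_Integration.integral_cong[OF refl])
    fix t
    have "(\<Sum>c\<in>?R. indicator (?S c) t :: real) = (\<Sum>c\<in>?R. if tree_output t (\<lambda>x. x = c) = fst c then 1 else 0)"
      by (rule sum.cong) (auto simp: indicator_def)
    also have "\<dots> = real (card {c \<in> ?R. tree_output t (\<lambda>x. x = c) = fst c})"
      by (simp add: sum.If_cases Int_def conj_commute)
    finally show "(\<Sum>c\<in>?R. indicator (?S c) t :: real) = real (card {c \<in> ?R. tree_output t (\<lambda>x. x = c) = fst c})" .
  qed
  also have "\<dots> \<le> max Q 0 + real (k+1)"
  proof (rule measure_pmf.integral_le_const)
    show "integrable (measure_pmf A) (\<lambda>t. real (card {c \<in> ?R. tree_output t (\<lambda>x. x = c) = fst c}))"
    proof (rule measure_pmf.integrable_const_bound[where B="real (card ?R)"])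
      have "\<And>t. card {c \<in> ?R. tree_output t (\<lambda>x. x = c) = fst c} \<le> card ?R"
        by (rule card_mono) auto
      then show "AE t in measure_pmf A. norm (real (card {c \<in> ?R. tree_output t (\<lambda>x. x = c) = fst c})) \<le> real (card ?R)"
        by (intro AE_I2) (simp only: norm_of_nat of_nat_le_iff)
    qed simp
    show "AE t in measure_pmf A. real (card {c \<in> ?R. tree_output t (\<lambda>x. x = c) = fst c}) \<le> max Q 0 + real (k+1)"
      by (rule AE_pmfI) (rule tree_count[OF wf bnd], auto)
  qed
  finally show ?thesis by (simp add: card_cartesian_product mult.commute algebra_simps)
qed

theorem theorem3:
  fixes p :: real and q :: "nat \<Rightarrow> nat \<Rightarrow> real"
  assumes "p > 0"
    and "((\<lambda>(k, m). q k m / (real k * real m)) \<longlongrightarrow> 0) (at_top \<times>\<^sub>F at_top)"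
  shows "\<not> (\<forall>k m. k + 1 \<le> m \<longrightarrow> (\<exists>A. solves_ARP k m (q k m) p A))"
proof
  assume H: "\<forall>k m. k + 1 \<le> m \<longrightarrow> (\<exists>A. solves_ARP k m (q k m) p A)"
  have lim: "LIM k sequentially. (k, k+1) :> at_top \<times>\<^sub>F at_top"
    by (rule filterlim_Pair) (simp_all add: filterlim_ident filterlim_Suc)
  have g: "((\<lambda>k. q k (k+1) / (real k * real (k+1))) \<longlongrightarrow> 0) sequentially"
    using filterlim_compose[OF assms(2) lim] by simp
  have ev1: "eventually (\<lambda>k. q k (k+1) / (real k * real (k+1)) < p/2) sequentially"
    using order_tendstoD(2)[OF g, of "p/2"] assms(1) by (simp only: half_gt_zero)
  have ev2: "eventually (\<lambda>k. real k \<ge> 2/p + 1) sequentially"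
    by (rule eventually_sequentiallyI[where c="nat \<lceil>2/p + 1\<rceil>"]) linarith
  obtain k where k1: "q k (k+1) / (real k * real (k+1)) < p/2" and k2: "real k \<ge> 2/p + 1"
    using eventually_conj[OF ev1 ev2] eventually_sequentially by auto
  have "2/p > 0" using assms(1) by simp
  hence kpos: "real k > 0" using k2 by linarith
  define N where "N = real k * real (k+1)"
  have Npos: "N > 0" using kpos by (simp add: N_def)
  obtain A where "solves_ARP k (k+1) (q k (k+1)) p A" using H by auto
  from one_k[OF this] have main: "p * N \<le> max (q k (k+1)) 0 + real (k+1)" by (simp add: N_def)
  have a: "q k (k+1) < p/2 * N" using k1 Npos by (simp add: N_def pos_divide_less_eq)
  have b: "0 < p/2 * N" using Npos assms(1) by simp
  have "p * real k \<ge> p * (2/p + 1)" using k2 assms(1) by (intro mult_left_mono) auto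
  also have "p * (2/p + 1) = 2 + p" using assms(1) by (simp add: field_simps)
  finally have "p * real k \<ge> 2 + p" .
  hence "p/2 * real k \<ge> 1" using assms(1) by simp
  hence "1 * real (k+1) \<le> (p/2 * real k) * real (k+1)" by (intro mult_right_mono) auto
  hence c: "real (k+1) \<le> p/2 * N" unfolding N_def by (simp add: mult.assoc)
  have "max (q k (k+1)) 0 + real (k+1) < p * N" using a b c by linarith
  with main show False by linarith
qed

end
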